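(* Let $m>0$, $V=[-m/2,m/2]$, and let $F$ be the CDF of a distribution $P\in\mathcal{P}$. Then for every $\ell\in V$, $$|F^{-1}(0.5)-\ell|\le 2m\,|0.5-F(\ell)|.$$
   Context: A distribution $P$ on $V$ with density $f_P$ and CDF $F_P$ is single-peaked at $\ell$ if $f_P(x)\le f_P(y)$ whenever $x\le y\le\ell$ or $x\ge y\ge\ell$. $\mathcal{P}$ is the class of absolutely continuous distributions on $V$ that are single-peaked at their median $F_P^{-1}(0.5)$ (a point $t$ with $F_P(t)=1/2$). *)

theory Defs
  imports "HOL-Analysis.Analysis"
begin

definition density_on :: "real set \<Rightarrow> (real \<Rightarrow> real) \<Rightarrow> bool" where
  "density_on V f \<longleftrightarrow> (\<forall>x\<in>V. 0 \<le> f x) \<and> set_integrable lborel V f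
     \<and> (LINT x:V|lborel. f x) = 1"

definition cdf_on :: "real set \<Rightarrow> (real \<Rightarrow> real) \<Rightarrow> real \<Rightarrow> real" where
  "cdf_on V f x = (LINT y:(V \<inter> {..x})|lborel. f y)"

definition single_peaked_at :: "real set \<Rightarrow> (real \<Rightarrow> real) \<Rightarrow> real \<Rightarrow> bool" where
  "single_peaked_at V f l \<longleftrightarrow>
     (\<forall>x\<in>V. \<forall>y\<in>V. (x \<le> y \<and> y \<le> l \<longrightarrow> f x \<le> f y) \<and> (x \<ge> y \<and> y \<ge> l \<longrightarrow> f x \<le> f y))"

text \<open>The class \<P>: absolutely continuous distributions on V single-peaked at a median t
  (a point with F t = 1/2).\<close>
definition class_P :: "real set \<Rightarrow> (real \<Rightarrow> real) \<Rightarrow> real \<Rightarrow> bool" where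
  "class_P V f t \<longleftrightarrow> density_on V f \<and> cdf_on V f t = 1/2 \<and> single_peaked_at V f t"

end

theory Submission
  imports Defs
begin

lemma cdf_eq:
  fixes a b x :: real
  assumes "set_integrable lborel {a..b} f" "x \<in> {a..b}"
  shows "cdf_on {a..b} f x = integral {a..x} f"
proof -
  have e: "{a..b} \<inter> {..x} = {a..x}" using assms(2) by auto
  have "set_integrable lborel {a..x} f"
    by (rule set_integrable_subset[OF assms(1)]) (use assms(2) in auto)
  then show ?thesis unfolding cdf_on_def e by (rule set_borel_integral_eq_integral(2))
qed

theorem lemma7p17:
  fixes m :: real and f :: "real \<Rightarrow> real" and t l :: real
  assumes "m > 0"
    and "class_P {-m/2..m/2} f t"
    and "l \<in> {-m/2..m/2}"
  shows "\<bar>t - l\<bar> \<le> 2 * m * \<bar>1/2 - cdf_on {-m/2..m/2} f l\<bar>"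
proof -
  define a where "a = -m/2"
  define b where "b = m/2"
  have ab: "a \<le> b" "b - a = m" using assms(1) by (auto simp: a_def b_def)
  have si: "set_integrable lborel {a..b} f" and tot: "(LINT x:{a..b}|lborel. f x) = 1"
    and ct: "cdf_on {a..b} f t = 1/2" and sp: "single_peaked_at {a..b} f t"
    using assms(2) unfolding class_P_def density_on_def a_def b_def by auto
  have fi: "f integrable_on {a..b}" using set_borel_integral_eq_integral(1)[OF si] .
  have I1: "integral {a..b} f = 1" using set_borel_integral_eq_integral(2)[OF si] tot by simp
  have lV: "l \<in> {a..b}" using assms(3) by (simp add: a_def b_def)
  have sub: "\<And>c d. a \<le> c \<Longrightarrow> d \<le> b \<Longrightarrow> f integrable_on {c..d}"
    using integrable_subinterval_real[OF fi] by auto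
  have tV: "t \<in> {a..b}"
  proof (rule ccontr)
    assume "t \<notin> {a..b}"
    then consider "t < a" | "t > b" by auto
    then show False
    proof cases
      case 1
      then have "{a..b} \<inter> {..t} = {}" by auto
      then have "cdf_on {a..b} f t = 0" by (simp add: cdf_on_def set_lebesgue_integral_def)
      then show False using ct by simp
    next
      case 2
      then have "{a..b} \<inter> {..t} = {a..b}" by auto
      then have "cdf_on {a..b} f t = 1" unfolding cdf_on_def using tot by (simp only:)
      then show False using ct by simp
    qed
  qed
  have Ft: "integral {a..t} f = 1/2" using ct cdf_eq[OF si tV] by simp
  have Fl: "cdf_on {-m/2..m/2} f l = integral {a..l} f" using cdf_eq[OF si lV] by (simp add: a_def b_def)
  consider "l < t" | "l = t" | "t < l" by linarith
  then show ?thesis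
  proof cases
    case 2 then show ?thesis using assms(1) by simp
  next
    case 1
    define A where "A = integral {a..l} f"
    define B where "B = integral {l..t} f"
    define c where "c = f l"
    have AB: "A + B = 1/2" unfolding A_def B_def using Henstock_Kurzweil_Integration.integral_combine[where a=a and c=l and b=t and f=f] sub[of a t] lV tV 1 Ft by auto
    have "A \<le> integral {a..l} (\<lambda>x. c)" unfolding A_def
      apply (rule integral_le) using sub[of a l] lV apply auto[2]
      using sp lV tV 1 unfolding single_peaked_at_def c_def by auto
    then have Ab: "A \<le> (l - a) * c" using lV by simp
    have "integral {l..t} (\<lambda>x. c) \<le> B" unfolding B_def
      apply (rule integral_le) using sub[of l t] lV tV apply auto[2]
      using sp lV tV 1 unfolding single_peaked_at_def c_def by auto
    then have Bb: "(t - l) * c \<le> B" using 1 by simp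
    have la: "l - a \<ge> 0" using lV by auto
    have "B * (l - a) \<ge> (t - l) * c * (l - a)" using Bb la by (simp add: mult_right_mono)
    moreover have "(t - l) * c * (l - a) \<ge> (t - l) * A" using Ab 1
      by (metis less_eq_real_def diff_ge_0_iff_ge mult.assoc mult.commute mult_left_mono)
    ultimately have "B * (l - a) \<ge> (t - l) * A" by linarith
    then have "B * (t - a) \<ge> (t - l) * (A + B)" by (simp add: algebra_simps)
    then have "B * (t - a) \<ge> (t - l) / 2" using AB by simp
    moreover have B0: "B \<ge> 0" using Bb sp lV tV 1 
      by (smt (verit) B_def integral_nonneg sub atLeastAtMost_iff assms(2) class_P_def density_on_def a_def b_def)
    moreover have "t - a \<le> m" using tV ab by auto
    ultimately have "B * m \<ge> (t - l) / 2" by (smt (verit) mult_left_mono)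
    moreover have "1/2 - cdf_on {-m/2..m/2} f l = B" using Fl AB A_def by simp
    ultimately have "\<bar>1/2 - cdf_on {-m/2..m/2} f l\<bar> = B" "B * m \<ge> (t - l) / 2" using B0 by auto
    then show ?thesis using 1 by (simp add: algebra_simps)
  next
    case 3
    define B where "B = integral {t..l} f"
    define C where "C = integral {l..b} f"
    define c where "c = f l"
    have BC: "B + C = 1/2" unfolding B_def C_def
      using Henstock_Kurzweil_Integration.integral_combine[where a=t and c=l and b=b and f=f] Henstock_Kurzweil_Integration.integral_combine[where a=a and c=t and b=b and f=f] sub[of t b] fi lV tV 3 Ft I1 by auto
    have Fl2: "integral {a..l} f = 1/2 + B" unfolding B_def
      using Henstock_Kurzweil_Integration.integral_combine[where a=a and c=t and b=l and f=f] sub[of a l] lV tV 3 Ft by auto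
    have "C \<le> integral {l..b} (\<lambda>x. c)" unfolding C_def
      apply (rule integral_le) using sub[of l b] lV apply auto[2]
      using sp lV tV 3 unfolding single_peaked_at_def c_def by auto
    then have Cb: "C \<le> (b - l) * c" using lV by simp
    have "integral {t..l} (\<lambda>x. c) \<le> B" unfolding B_def
      apply (rule integral_le) using sub[of t l] lV tV apply auto[2]
      using sp lV tV 3 unfolding single_peaked_at_def c_def by auto
    then have Bb: "(l - t) * c \<le> B" using 3 by simp
    have lb: "b - l \<ge> 0" using lV by auto
    have "B * (b - l) \<ge> (l - t) * c * (b - l)" using Bb lb by (simp add: mult_right_mono)
    moreover have "(l - t) * c * (b - l) \<ge> (l - t) * C" using Cb 3
      by (metis less_eq_real_def diff_ge_0_iff_ge mult.assoc mult.commute mult_left_mono)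
    ultimately have "B * (b - l) \<ge> (l - t) * C" by linarith
    then have "B * (b - t) \<ge> (l - t) * (B + C)" by (simp add: algebra_simps)
    then have "B * (b - t) \<ge> (l - t) / 2" using BC by simp
    moreover have B0: "B \<ge> 0" using Bb sp lV tV 3
      by (smt (verit) B_def integral_nonneg sub atLeastAtMost_iff assms(2) class_P_def density_on_def a_def b_def)
    moreover have "b - t \<le> m" using tV ab by auto
    ultimately have "B * m \<ge> (l - t) / 2" by (smt (verit) mult_left_mono)
    moreover have "cdf_on {-m/2..m/2} f l - 1/2 = B" using Fl Fl2 by simp
    ultimately have "\<bar>1/2 - cdf_on {-m/2..m/2} f l\<bar> = B" "B * m \<ge> (l - t) / 2" using B0 by auto
    then show ?thesis using 3 by (simp add: algebra_simps)
  qed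
qed

end
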